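(* Consider the channel $y=hx+v$ with $v\sim\mathcal{CN}(0,1)$ independent of everything, perfect CSI at transmitter and receiver, and suppose $|h|^2$ has a continuous probability density $f$, finite mean, and cumulative distribution function $F$ that is strictly increasing on its support. Fix $A>1$. Let $$C(\mathrm{SNR})=\sup\ \mathbf{E}\left[\log\left(1+P(h)|h|^2\right)\right],$$ the supremum being over measurable power allocations $P(h)\ge0$ with $\mathbf{E}[P(h)]\le \mathrm{SNR}$ and $\max_h P(h)\le A\,\mathrm{SNR}$. Then $$\lim_{\mathrm{SNR}\to0}\frac{C(\mathrm{SNR})}{A\,\mathrm{SNR}\int_{1-\frac1A}^{1}F^{-1}(t)\,dt}=1,$$ where $\int_{1-\frac1A}^1F^{-1}(t)\,dt=\int_{F^{-1}(1-1/A)}^\infty t f(t)\,dt$.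
   Context: Logarithms are natural (capacity in nats per channel use). $A$ is the peak-to-average power ratio. Equivalently, $C(\mathrm{SNR})=\int_\lambda^\infty \min\{\log(t/\lambda),\log(1+A\,\mathrm{SNR}\,t)\}f(t)\,dt$, where $\lambda$ is determined by $\mathrm{SNR}=\mathbf{E}[\min\{[1/\lambda-1/|h|^2]^+,A\,\mathrm{SNR}\}]$. *)

theory Defs
  imports "HOL-Probability.Probability"
begin

text \<open>M is the distribution of the fading coefficient h (a complex random variable).
  The channel gain is |h|^2 = (cmod h)^2.\<close>

definition gainCDF :: "complex measure \<Rightarrow> real \<Rightarrow> real" where
  "gainCDF M t = measure M {z \<in> space M. (cmod z)^2 \<le> t}"

definition gainSupport :: "complex measure \<Rightarrow> real set" where
  "gainSupport M = {t. \<forall>e>0. measure M {z \<in> space M. (cmod z)^2 \<in> ball t e} > 0}"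

definition gainQuantile :: "complex measure \<Rightarrow> real \<Rightarrow> real" where
  "gainQuantile M u = Inf {t. gainCDF M t \<ge> u}"

definition admissible :: "complex measure \<Rightarrow> real \<Rightarrow> real \<Rightarrow> (complex \<Rightarrow> real) set" where
  "admissible M A snr = {P. P \<in> borel_measurable M \<and> (\<forall>z. 0 \<le> P z) \<and>
      integrable M P \<and> integral\<^sup>L M P \<le> snr \<and> (\<forall>z. P z \<le> A * snr)}"

definition capacity :: "complex measure \<Rightarrow> real \<Rightarrow> real \<Rightarrow> real" where
  "capacity M A snr = (SUP P\<in>admissible M A snr. integral\<^sup>L M (\<lambda>z. ln (1 + P z * (cmod z)^2)))"

end

theory Submission
  imports Defs
begin

lemma xln_lim: "(c::real) \<ge> 0 \<Longrightarrow> ((\<lambda>x. x * ln (1 + c / x)) \<longlongrightarrow> c) at_top"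
proof -
  assume c: "c \<ge> 0"
  show ?thesis
  proof (rule tendsto_sandwich[where f="\<lambda>x. c - c^2 / x" and h="\<lambda>x. c"])
    show "\<forall>\<^sub>F x in at_top. c - c\<^sup>2 / x \<le> x * ln (1 + c / x)"
      using eventually_ge_at_top[of "c + 1"]
    proof eventually_elim
      case (elim x)
      then have x0: "x > 0" using c by simp
      have "c / x - (c/x)^2 \<le> ln (1 + c / x)"
        by (rule ln_one_plus_pos_lower_bound) (use c elim in auto)
      then have "x * (c / x - (c/x)^2) \<le> x * ln (1 + c / x)"
        using x0 by (intro mult_left_mono) auto
      moreover have "x * (c / x - (c/x)^2) = c - c^2 / x" using x0 by (simp add: field_simps power2_eq_square)
      ultimately show ?case by simp
    qed
    show "\<forall>\<^sub>F x in at_top. x * ln (1 + c / x) \<le> c"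
      using eventually_gt_at_top[of 0]
    proof eventually_elim
      case (elim x)
      have "ln (1 + c / x) \<le> c / x" by (rule ln_add_one_self_le_self) (use c elim in auto)
      then have "x * ln (1 + c / x) \<le> x * (c / x)" using elim by (intro mult_left_mono) auto
      then show ?case using elim by simp
    qed
    show "((\<lambda>x. c - c\<^sup>2 / x) \<longlongrightarrow> c) at_top"
      using tendsto_diff[OF tendsto_const tendsto_divide_0[OF tendsto_const filterlim_at_top_imp_at_infinity[OF filterlim_ident]], of c "c^2"] by simp
  qed simp
qed

theorem theorem1:
  fixes M :: "complex measure" and f :: "real \<Rightarrow> real" and A :: real
  assumes "prob_space M"
    and "sets M = sets borel"
    and "distributed M lborel (\<lambda>z. (cmod z)^2) (\<lambda>t. ennreal (f t))"
    and "\<And>t. 0 \<le> f t"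
    and "continuous_on {0..} f"
    and "integrable M (\<lambda>z. (cmod z)^2)"
    and "strict_mono_on (gainSupport M) (gainCDF M)"
    and "A > 1"
  shows "((\<lambda>snr. capacity M A snr /
            (A * snr * (LBINT u=1 - 1/A..1. gainQuantile M u))) \<longlongrightarrow> 1) (at_right 0)"
proof -
  interpret prob_space M by fact
  define g where "g = (\<lambda>z::complex. (cmod z)^2)"
  have spM: "space M = UNIV"
    using sets_eq_imp_space_eq[OF assms(2)] by simp
  have gmeas[measurable]: "g \<in> borel_measurable M"
  proof -
    have "g \<in> borel_measurable borel" unfolding g_def by measurable
    then show ?thesis using measurable_cong_sets[OF assms(2) refl] by blast
  qed
  have gint: "integrable M g" using assms(6) unfolding g_def .
  have g0: "\<And>z. 0 \<le> g z" unfolding g_def by simp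
  define N where "N = distr M borel g"
  interpret N: cdf_distribution N
    unfolding cdf_distribution_def N_def using gmeas unfolding g_def by (rule real_distribution_distr)
  have cdfeq: "gainCDF M t = cdf N t" for t
    unfolding gainCDF_def cdf_def N_def
    by (subst measure_distr) (use gmeas in \<open>simp_all add: spM vimage_def g_def\<close>)
  define a where "a = 1 - 1/A"
  have a01: "0 < a" "a < 1" using assms(8) unfolding a_def by (auto simp: field_simps)
  define Q where "Q = (\<lambda>u. Inf {x. u \<le> cdf N x})"
  define q where "q = gainQuantile M a"
  have qQ: "q = Q a" unfolding q_def Q_def gainQuantile_def cdfeq ..
  have gQ: "gainQuantile M u = Q u" for u unfolding Q_def gainQuantile_def cdfeq ..
  have pseudo: "u \<le> cdf N x \<longleftrightarrow> Q u \<le> x" if "0 < u" "u < 1" for u x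
    unfolding Q_def using N.pseudoinverse[of u x] that by blast
  have aleq: "a \<le> cdf N q" using pseudo[OF a01] qQ by simp
  have ltq: "cdf N x < a" if "x < q" for x using pseudo[OF a01, of x] qQ that by auto
  have atom: "measure N {q} = 0"
  proof -
    have dd: "distr M lborel g = density lborel f"
      using distributed_distr_eq_density[OF assms(3)] unfolding g_def .
    have "measure N {q} = measure M (g -` {q} \<inter> space M)"
      unfolding N_def by (rule measure_distr) simp_all
    also have "\<dots> = measure (distr M lborel g) {q}"
      by (rule measure_distr[symmetric]) simp_all
    also have "\<dots> = measure (density lborel f) {q}" unfolding dd ..
    also have "\<dots> = 0"
    proof -
      have fm: "(\<lambda>x. ennreal (f x)) \<in> borel_measurable lborel"
        using distributed_borel_measurable[OF assms(3)] .
      have "emeasure (density lborel f) {q} = (\<integral>\<^sup>+x. ennreal (f x) * indicator {q} x \<partial>lborel)"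
        by (rule emeasure_density) (use fm in simp_all)
      also have "\<dots> = 0"
        by (rule nn_integral_null_set) (simp add: null_sets_def)
      finally show ?thesis by (simp add: measure_def)
    qed
    finally show ?thesis .
  qed
  have contq: "cdf N q = a"
  proof -
    have "isCont (cdf N) q" using N.isCont_cdf[THEN iffD2, OF atom] .
    then have "(cdf N \<longlongrightarrow> cdf N q) (at q)" unfolding isCont_def .
    then have "(cdf N \<longlongrightarrow> cdf N q) (at_left q)"
      unfolding filterlim_at_split by blast
    moreover have "\<forall>\<^sub>F x in at_left q. cdf N x \<le> a"
      unfolding eventually_at_left_field by (intro exI[of _ "q - 1"] conjI allI impI) (simp_all add: less_imp_le ltq)
    ultimately have "cdf N q \<le> a" by (rule tendsto_upperbound) simp
    with aleq show ?thesis by simp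
  qed
  have q0: "0 \<le> q"
  proof (rule ccontr)
    assume "\<not> 0 \<le> q"
    then have "\<And>z. \<not> g z \<le> q" using g0 by (metis order.trans)
    then have E: "{z \<in> space M. g z \<le> q} = {}" by simp
    have "gainCDF M q = measure M {z \<in> space M. g z \<le> q}"
      by (simp add: gainCDF_def g_def)
    also have "\<dots> = 0" unfolding E by simp
    finally have "cdf N q = 0" using cdfeq by simp
    with contq a01 show False by simp
  qed
  define S where "S = {z. q < g z}"
  have Ssets[measurable]: "S \<in> sets M"
  proof -
    have "{z \<in> space M. q < g z} \<in> sets M" by measurable
    then show ?thesis unfolding S_def spM by simp
  qed
  have measS: "measure M S = 1 / A"
  proof -
    have "S = space M - {z \<in> space M. g z \<le> q}" unfolding S_def spM by auto
    then have "measure M S = 1 - measure M {z \<in> space M. g z \<le> q}"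
      by (simp add: prob_compl)
    also have "measure M {z \<in> space M. g z \<le> q} = cdf N q"
      using cdfeq[of q] by (simp add: gainCDF_def g_def)
    finally show ?thesis using contq unfolding a_def by simp
  qed
  define h where "h = (\<lambda>z. indicator S z * g z)"
  have hmeas[measurable]: "h \<in> borel_measurable M" unfolding h_def by measurable
  have hint: "integrable M h" unfolding h_def
    using integrable_mult_indicator[OF Ssets gint] by simp
  have h0: "\<And>z. 0 \<le> h z" unfolding h_def using g0 by (simp add: indicator_def)
  have hle: "\<And>z. h z \<le> g z" unfolding h_def using g0 by (simp add: indicator_def)
  define K where "K = integral\<^sup>L M h"
  have Kge: "0 \<le> K" unfolding K_def by (rule integral_nonneg_AE) (simp add: h0)
  have K0: "0 < K"
  proof (rule ccontr)
    assume "\<not> 0 < K"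
    with Kge have "integral\<^sup>L M h = 0" unfolding K_def by simp
    then have "AE z in M. h z = 0" using integral_nonneg_eq_0_iff_AE[OF hint] h0 by simp
    then have "AE z in M. z \<notin> S"
    proof eventually_elim
      case (elim z)
      show ?case
      proof
        assume "z \<in> S"
        then have "h z = g z" "q < g z" unfolding h_def S_def by simp_all
        with elim q0 show False by simp
      qed
    qed
    then have "measure M S = 0" using prob_eq_0[OF Ssets] by simp
    with measS assms(8) show False by simp
  qed
  have ein: "einterval (ereal a) 1 = {a<..<1}"
    using einterval_eq(1)[of a 1] by (simp add: one_ereal_def)
  have Qm: "Q \<in> borel_measurable (restrict_space lborel {0<..<1})"
    using N.measurable_CI unfolding Q_def
    by (simp add: measurable_cong_sets[OF sets_restrict_space_cong[OF sets_lborel] refl])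
  have LK: "(LBINT u=1 - 1/A..1. gainQuantile M u) = K"
  proof -
    have "(LBINT u=1 - 1/A..1. gainQuantile M u) = (LBINT u=a..1. Q u)"
      unfolding a_def gQ ..
    also have "\<dots> = integral\<^sup>L lborel (\<lambda>u. indicator {a<..<1} u *\<^sub>R Q u)"
      unfolding interval_lebesgue_integral_def ein set_lebesgue_integral_def
      using a01 by (simp add: one_ereal_def)
    also have "\<dots> = integral\<^sup>L lborel (\<lambda>u. indicator {0<..<1} u *\<^sub>R (indicator {q<..} (Q u) * Q u))"
    proof (rule Bochner_Integration.integral_cong[OF refl])
      fix u :: real
      show "indicator {a<..<1} u *\<^sub>R Q u = indicator {0<..<1} u *\<^sub>R (indicator {q<..} (Q u) * Q u)"
      proof (cases "0 < u \<and> u < 1")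
        case True
        then have "(u \<le> a) = (Q u \<le> q)" using pseudo[of u q] contq by simp
        then show ?thesis using True by (auto simp: indicator_def)
      next
        case False
        then show ?thesis using a01 by (auto simp: indicator_def)
      qed
    qed
    also have "\<dots> = integral\<^sup>L (restrict_space lborel {0<..<1}) (\<lambda>u. indicator {q<..} (Q u) * Q u)"
      by (rule integral_restrict_space[symmetric]) simp
    also have "\<dots> = integral\<^sup>L (distr (restrict_space lborel {0<..<1}) borel Q) (\<lambda>t. indicator {q<..} t * t)"
      by (rule integral_distr[symmetric]) (use Qm in simp_all)
    also have "distr (restrict_space lborel {0<..<1}) borel Q = N"
      unfolding Q_def by (rule N.distr_I_eq_M)
    also have "integral\<^sup>L N (\<lambda>t. indicator {q<..} t * t) = integral\<^sup>L M (\<lambda>z. indicator {q<..} (g z) * g z)"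
      unfolding N_def by (rule integral_distr) simp_all
    also have "\<dots> = K" unfolding K_def h_def S_def by (simp add: indicator_def)
    finally show ?thesis .
  qed
  have indint: "integrable M (indicator S :: complex \<Rightarrow> real)"
    by (rule integrable_real_indicator[OF Ssets]) (simp add: less_top[symmetric])
  have upP: "integral\<^sup>L M (\<lambda>z. ln (1 + P z * (cmod z)^2)) \<le> A * s * K"
    if PA: "P \<in> admissible M A s" and s0: "0 < s" for P s
  proof -
    from PA have Pm[measurable]: "P \<in> borel_measurable M" and P0: "\<And>z. 0 \<le> P z"
      and Pi: "integrable M P" and EP: "integral\<^sup>L M P \<le> s" and Pb: "\<And>z. P z \<le> A * s"
      unfolding admissible_def by auto
    have Pgi: "integrable M (\<lambda>z. P z * g z)"
    proof -
      have gi2: "integrable M (\<lambda>z. A * s * g z)" using gint by simp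
      show ?thesis
    proof (rule Bochner_Integration.integrable_bound[OF gi2])
      show "(\<lambda>z. P z * g z) \<in> borel_measurable M" by measurable
      show "AE z in M. norm (P z * g z) \<le> norm (A * s * g z)"
      proof (rule AE_I2)
        fix z
        have "P z * g z \<le> A * s * g z" using Pb g0 by (intro mult_right_mono) auto
        then show "norm (P z * g z) \<le> norm (A * s * g z)" using P0[of z] g0[of z] by simp
      qed
    qed
    qed
    have lni: "integrable M (\<lambda>z. ln (1 + P z * g z))"
    proof (rule Bochner_Integration.integrable_bound[OF Pgi])
      show "(\<lambda>z. ln (1 + P z * g z)) \<in> borel_measurable M" by measurable
      show "AE z in M. norm (ln (1 + P z * g z)) \<le> norm (P z * g z)"
      proof (rule AE_I2)
        fix z
        have nn: "0 \<le> P z * g z" using P0[of z] g0[of z] by simp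
        then have "0 \<le> ln (1 + P z * g z)" by simp
        then show "norm (ln (1 + P z * g z)) \<le> norm (P z * g z)"
          using ln_add_one_self_le_self[OF nn] nn by simp
      qed
    qed
    have i2: "integrable M (\<lambda>z. A * s * h z + q * (P z - A * s * indicator S z))"
      using hint Pi indint by simp
    have "integral\<^sup>L M (\<lambda>z. ln (1 + P z * (cmod z)^2)) = integral\<^sup>L M (\<lambda>z. ln (1 + P z * g z))"
      by (simp add: g_def)
    also have "\<dots> \<le> integral\<^sup>L M (\<lambda>z. P z * g z)"
    proof (rule integral_mono[OF lni Pgi])
      fix z
      have nn: "0 \<le> P z * g z" using P0[of z] g0[of z] by simp
      show "ln (1 + P z * g z) \<le> P z * g z" by (rule ln_add_one_self_le_self[OF nn])
    qed
    also have "\<dots> \<le> integral\<^sup>L M (\<lambda>z. A * s * h z + q * (P z - A * s * indicator S z))"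
    proof (rule integral_mono[OF Pgi i2])
      fix z
      show "P z * g z \<le> A * s * h z + q * (P z - A * s * indicator S z)"
      proof (cases "z \<in> S")
        case True
        then have gq: "q < g z" unfolding S_def by simp
        have "0 \<le> (A * s - P z) * (g z - q)" using Pb[of z] gq by simp
        then show ?thesis using True unfolding h_def by (simp add: algebra_simps)
      next
        case False
        then have gq: "g z \<le> q" unfolding S_def by simp
        have "P z * g z \<le> P z * q" using mult_left_mono[OF gq P0[of z]] .
        then show ?thesis using False unfolding h_def by (simp add: algebra_simps)
      qed
    qed
    also have "\<dots> = A * s * K + q * (integral\<^sup>L M P - A * s * measure M S)"
      using hint Pi indint by (simp add: K_def spM)
    also have "\<dots> \<le> A * s * K"
    proof -
      have "A * s * measure M S = s" using measS assms(8) by simp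
      then have "integral\<^sup>L M P - A * s * measure M S \<le> 0" using EP by linarith
      then have "q * (integral\<^sup>L M P - A * s * measure M S) \<le> 0"
        by (rule mult_nonneg_nonpos[OF q0])
      then show ?thesis by simp
    qed
    finally show ?thesis .
  qed
  have Popt: "(\<lambda>z. A * s * indicator S z) \<in> admissible M A s" if s0: "0 < s" for s
  proof -
    have "integral\<^sup>L M (\<lambda>z. A * s * indicator S z) = A * s * measure M S"
      by (simp add: spM)
    also have "\<dots> = s" using measS assms(8) by simp
    finally have "integral\<^sup>L M (\<lambda>z. A * s * indicator S z) \<le> s" by (rule eq_refl)
    moreover have "integrable M (\<lambda>z. A * s * indicator S z)" using indint by simp
    moreover have "\<forall>z. 0 \<le> A * s * indicator S z" using s0 assms(8) by (simp add: indicator_def)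
    moreover have "\<forall>z. A * s * indicator S z \<le> A * s" using s0 assms(8) by (simp add: indicator_def)
    moreover have "(\<lambda>z. A * s * indicator S z) \<in> borel_measurable M" by measurable
    ultimately show ?thesis unfolding admissible_def mem_Collect_eq by blast
  qed
  have capup: "capacity M A s \<le> A * s * K" if s0: "0 < s" for s
    unfolding capacity_def
    by (rule cSUP_least) (use Popt[OF s0] upP[OF _ s0] in auto)
  have caplow: "integral\<^sup>L M (\<lambda>z. ln (1 + A * s * h z)) \<le> capacity M A s" if s0: "0 < s" for s
  proof -
    have bdd: "bdd_above ((\<lambda>P. integral\<^sup>L M (\<lambda>z. ln (1 + P z * (cmod z)^2))) ` admissible M A s)"
      by (rule bdd_aboveI2[where M="A * s * K"]) (rule upP[OF _ s0])
    have "integral\<^sup>L M (\<lambda>z. ln (1 + A * s * h z)) =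
        integral\<^sup>L M (\<lambda>z. ln (1 + (A * s * indicator S z) * (cmod z)^2))"
      by (simp add: h_def g_def mult.assoc)
    also have "\<dots> \<le> capacity M A s"
      unfolding capacity_def by (rule cSUP_upper[OF Popt[OF s0] bdd])
    finally show ?thesis .
  qed
  have limK: "((\<lambda>t. integral\<^sup>L M (\<lambda>z. t * ln (1 + A * h z / t) / A)) \<longlongrightarrow> K) at_top"
    unfolding K_def
  proof (rule integral_dominated_convergence_at_top[where w=h])
    show "h \<in> borel_measurable M" by measurable
    show "(\<lambda>z. t * ln (1 + A * h z / t) / A) \<in> borel_measurable M" for t by measurable
    show "integrable M h" by (rule hint)
    show "AE z in M. ((\<lambda>t. t * ln (1 + A * h z / t) / A) \<longlongrightarrow> h z) at_top"
    proof (rule AE_I2)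
      fix z
      have "((\<lambda>t. t * ln (1 + A * h z / t) / A) \<longlongrightarrow> A * h z / A) at_top"
        by (rule tendsto_divide[OF xln_lim tendsto_const]) (use h0[of z] assms(8) in simp_all)
      then show "((\<lambda>t. t * ln (1 + A * h z / t) / A) \<longlongrightarrow> h z) at_top"
        using assms(8) by simp
    qed
    show "\<forall>\<^sub>F t in at_top. AE z in M. norm (t * ln (1 + A * h z / t) / A) \<le> h z"
      using eventually_gt_at_top[of 0]
    proof eventually_elim
      case (elim t)
      show ?case
      proof (rule AE_I2)
        fix z
        have nn: "0 \<le> A * h z / t" using h0[of z] assms(8) elim by simp
        have l0: "0 \<le> ln (1 + A * h z / t)" using nn by simp
        have "t * ln (1 + A * h z / t) \<le> t * (A * h z / t)"
          by (rule mult_left_mono[OF ln_add_one_self_le_self[OF nn]]) (use elim in simp)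
        then have "t * ln (1 + A * h z / t) / A \<le> h z" using elim assms(8) by (simp add: field_simps)
        moreover have "0 \<le> t * ln (1 + A * h z / t) / A" using l0 elim assms(8) by simp
        ultimately show "norm (t * ln (1 + A * h z / t) / A) \<le> h z" by simp
      qed
    qed
  qed
  have lim1: "((\<lambda>s. integral\<^sup>L M (\<lambda>z. ln (1 + A * s * h z)) / (A * s * K)) \<longlongrightarrow> 1) (at_right 0)"
    unfolding filterlim_at_right_to_top
  proof -
    have "((\<lambda>t. integral\<^sup>L M (\<lambda>z. t * ln (1 + A * h z / t) / A) / K) \<longlongrightarrow> K / K) at_top"
      by (rule tendsto_divide[OF limK tendsto_const]) (use K0 in simp)
    then have *: "((\<lambda>t. integral\<^sup>L M (\<lambda>z. t * ln (1 + A * h z / t) / A) / K) \<longlongrightarrow> 1) at_top"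
      using K0 by simp
    show "((\<lambda>x. integral\<^sup>L M (\<lambda>z. ln (1 + A * inverse x * h z)) / (A * inverse x * K)) \<longlongrightarrow> 1) at_top"
    proof (rule Lim_transform_eventually[OF *])
      show "\<forall>\<^sub>F t in at_top. integral\<^sup>L M (\<lambda>z. t * ln (1 + A * h z / t) / A) / K =
          integral\<^sup>L M (\<lambda>z. ln (1 + A * inverse t * h z)) / (A * inverse t * K)"
        using eventually_gt_at_top[of 0]
      proof eventually_elim
        case (elim t)
        have e1: "(\<lambda>z. t * ln (1 + A * h z / t) / A) = (\<lambda>z. (t / A) * ln (1 + A * inverse t * h z))"
          by (rule ext) (simp add: divide_inverse mult.commute mult.left_commute)
        show ?case unfolding e1 using elim K0 assms(8) by (simp add: field_simps)
      qed
    qed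
  qed
  show ?thesis
    unfolding LK
  proof (rule tendsto_sandwich[OF _ _ lim1 tendsto_const])
    show "\<forall>\<^sub>F s in at_right 0. integral\<^sup>L M (\<lambda>z. ln (1 + A * s * h z)) / (A * s * K) \<le> capacity M A s / (A * s * K)"
      unfolding eventually_at_right_field
      by (intro exI[of _ 1] conjI allI impI divide_right_mono caplow) (use K0 assms(8) in simp_all)
    show "\<forall>\<^sub>F s in at_right 0. capacity M A s / (A * s * K) \<le> 1"
      unfolding eventually_at_right_field
    proof (intro exI[of _ 1] conjI allI impI)
      fix s :: real assume "0 < s"
      then have pos: "0 < A * s * K" using K0 assms(8) by simp
      show "capacity M A s / (A * s * K) \<le> 1"
        using capup[OF \<open>0 < s\<close>] pos by simp
    qed simp
  qed
qed
end
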